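(* Let $p$ be a prime and $f\in\mathbb{Z}_p[x]$ with $\deg f\ge 2$. If $E\subset\mathbb{Z}_p$ is a clopen $f$-invariant set such that $f:E\to E$ is minimal, then $f:E\to E$ is topologically conjugate to the adding machine $\tau:x\mapsto x+1$ on the odometer $\mathbb{Z}_{(p_s)}$, where $$(p_s)_{s\ge1}=(k,\,kd,\,kdp,\,kdp^2,\,\dots)$$ for some integers $k,d$ with $1\le k\le p$ and $d\mid (p-1)$.
   Context: For a sequence of positive integers $(p_s)_{s\ge1}$ with $p_s\mid p_{s+1}$, the odometer $\mathbb{Z}_{(p_s)}$ is the inverse limit $\varprojlim \mathbb{Z}/p_s\mathbb{Z}$ (a profinite group), and the adding machine is the map $\tau(x)=x+1$ on it. $f:E\to E$ is minimal if every orbit is dense in $E$; topological conjugacy means there is a homeomorphism $h:E\to\mathbb{Z}_{(p_s)}$ with $h\circ f=\tau\circ h$. *)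

theory Defs
  imports "HOL-Analysis.Analysis" "HOL-Computational_Algebra.Primes"
begin

text \<open>Inverse limit of Z/P(s)Z (s = 0,1,2,...), realised as compatible
  sequences of residues x s in {0..<P s}, with the subspace topology of the
  product of discrete spaces (the inverse-limit topology).\<close>

definition odometer :: "(nat \<Rightarrow> nat) \<Rightarrow> (nat \<Rightarrow> nat) set" where
  "odometer P = {x. \<forall>s. x s < P s \<and> x s = x (Suc s) mod P s}"

definition odometer_top :: "(nat \<Rightarrow> nat) \<Rightarrow> (nat \<Rightarrow> nat) topology" where
  "odometer_top P = subtopology (product_topology (\<lambda>_. discrete_topology UNIV) UNIV) (odometer P)"

definition adding_machine :: "(nat \<Rightarrow> nat) \<Rightarrow> (nat \<Rightarrow> nat) \<Rightarrow> (nat \<Rightarrow> nat)" where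
  "adding_machine P x = (\<lambda>s. (x s + 1) mod P s)"

definition Zp :: "nat \<Rightarrow> (nat \<Rightarrow> nat) set" where
  "Zp p = odometer (\<lambda>s. p ^ s)"

definition Zp_top :: "nat \<Rightarrow> (nat \<Rightarrow> nat) topology" where
  "Zp_top p = odometer_top (\<lambda>s. p ^ s)"

definition Zp_zero :: "nat \<Rightarrow> nat" where
  "Zp_zero = (\<lambda>s. 0)"

text \<open>Evaluation of the polynomial sum_{i<=n} c_i X^i with coefficients c_i in Z_p,
  computed levelwise modulo p^s (ring operations of Z_p are levelwise).\<close>
definition Zp_poly_eval :: "nat \<Rightarrow> nat \<Rightarrow> (nat \<Rightarrow> nat \<Rightarrow> nat) \<Rightarrow> (nat \<Rightarrow> nat) \<Rightarrow> (nat \<Rightarrow> nat)" where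
  "Zp_poly_eval p n c x = (\<lambda>s. (\<Sum>i\<le>n. c i s * x s ^ i) mod p ^ s)"

definition minimal_on :: "'a topology \<Rightarrow> 'a set \<Rightarrow> ('a \<Rightarrow> 'a) \<Rightarrow> bool" where
  "minimal_on X E f \<longleftrightarrow>
     (\<forall>x\<in>E. (subtopology X E) closure_of {(f ^^ m) x | m. True} = E)"

definition top_conjugate :: "'a topology \<Rightarrow> ('a \<Rightarrow> 'a) \<Rightarrow> 'b topology \<Rightarrow> ('b \<Rightarrow> 'b) \<Rightarrow> bool" where
  "top_conjugate X f Y g \<longleftrightarrow>
     (\<exists>h. homeomorphic_map X Y h \<and> (\<forall>x\<in>topspace X. h (f x) = g (h x)))"

text \<open>The sequence (k, kd, kdp, kdp^2, ...), indexed from 0.\<close>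
definition odo_seq :: "nat \<Rightarrow> nat \<Rightarrow> nat \<Rightarrow> nat \<Rightarrow> nat" where
  "odo_seq p k d s = (if s = 0 then k else k * d * p ^ (s - 1))"

end

theory Submission
  imports Defs "HOL-Number_Theory.Number_Theory"
begin


definition dchain :: "(nat \<Rightarrow> nat) \<Rightarrow> bool" where
  "dchain P \<longleftrightarrow> (\<forall>r. P r dvd P (Suc r))"

lemma dchain_dvd: "dchain P \<Longrightarrow> s \<le> t \<Longrightarrow> P s dvd P t"
proof (induction t)
  case 0 then show ?case by simp
next
  case (Suc t)
  show ?case
  proof (cases "s = Suc t")
    case True then show ?thesis by simp
  next
    case False
    then have "P s dvd P t" using Suc by simp
    moreover have "P t dvd P (Suc t)" using Suc.prems(1) unfolding dchain_def by blast
    ultimately show ?thesis by (rule dvd_trans)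
  qed
qed

lemma odo_le: "x \<in> odometer P \<Longrightarrow> dchain P \<Longrightarrow> s \<le> t \<Longrightarrow> x s = x t mod P s"
proof (induction t)
  case 0
  have "x 0 < P 0" using 0 unfolding odometer_def by blast
  then show ?case using 0 by simp
next
  case (Suc t)
  have step: "x t = x (Suc t) mod P t" using Suc.prems(1) unfolding odometer_def by blast
  show ?case
  proof (cases "s = Suc t")
    case True
    have "x s < P s" using Suc.prems(1) unfolding odometer_def by blast
    then show ?thesis using True by simp
  next
    case False
    then have st: "s \<le> t" using Suc.prems by simp
    then have "x s = x t mod P s" using Suc.IH Suc.prems(1,2) by blast
    also have "\<dots> = (x (Suc t) mod P t) mod P s" using step by simp
    also have "\<dots> = x (Suc t) mod P s"
      using dchain_dvd[OF Suc.prems(2) st] by (rule mod_mod_cancel)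
    finally show ?thesis .
  qed
qed

lemma topspace_odo [simp]: "topspace (odometer_top P) = odometer P"
  by (simp add: odometer_top_def)

lemma cyl_open: "openin (odometer_top P) {y \<in> odometer P. y s = v}"
proof -
  have "openin (product_topology (\<lambda>_. discrete_topology UNIV) UNIV) {y. y s = v}"
  proof -
    have "continuous_map (product_topology (\<lambda>_::nat. discrete_topology (UNIV::nat set)) UNIV)
           (discrete_topology UNIV) (\<lambda>x. x s)"
      by (rule continuous_map_product_projection) simp
    from openin_continuous_map_preimage[OF this, of "{v}"] show ?thesis by simp
  qed
  then show ?thesis unfolding odometer_top_def openin_subtopology by blast
qed

lemma cyl_basis:
  assumes "dchain P" "openin (odometer_top P) U" "x \<in> U"
  shows "\<exists>s. \<forall>y\<in>odometer P. y s = x s \<longrightarrow> y \<in> U"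
proof -
  obtain T where T: "openin (product_topology (\<lambda>_. discrete_topology UNIV) UNIV) T"
    and U: "U = T \<inter> odometer P"
    using assms(2) unfolding odometer_top_def openin_subtopology by blast
  have xT: "x \<in> T" and xO: "x \<in> odometer P" using assms(3) U by auto
  have "\<exists>V. finite {i \<in> UNIV. V i \<noteq> topspace (discrete_topology (UNIV::nat set))} \<and>
      (\<forall>i \<in> UNIV. openin (discrete_topology UNIV) (V i)) \<and> x \<in> Pi\<^sub>E UNIV V \<and> Pi\<^sub>E UNIV V \<subseteq> T"
    using T xT unfolding openin_product_topology_alt by blast
  then obtain V where fin: "finite {i. V i \<noteq> (UNIV::nat set)}"
    and xV: "x \<in> Pi\<^sub>E UNIV V" and VT: "Pi\<^sub>E UNIV V \<subseteq> T"
    by auto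
  define s where "s = Max (insert 0 {i. V i \<noteq> UNIV})"
  have sbig: "V i = UNIV" if "i > s" for i
    using that fin unfolding s_def
    by (metis (mono_tags, lifting) Max_ge finite_insert insertCI leD mem_Collect_eq)
  show ?thesis
  proof (intro exI ballI impI)
    fix y assume yO: "y \<in> odometer P" and ys: "y s = x s"
    have "y i \<in> V i" for i
    proof (cases "i \<le> s")
      case True
      then have "y i = x i" using odo_le[OF yO assms(1) True] odo_le[OF xO assms(1) True] ys by simp
      then show ?thesis using xV by auto
    next
      case False then show ?thesis using sbig by simp
    qed
    then have "y \<in> Pi\<^sub>E UNIV V" by (simp add: PiE_iff)
    then show "y \<in> U" using VT U yO by auto
  qed
qed

lemma cont_disc:
  assumes "S \<subseteq> odometer P" "\<And>x y. x \<in> S \<Longrightarrow> y \<in> S \<Longrightarrow> x r = y r \<Longrightarrow> g x = g y"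
  shows "continuous_map (subtopology (odometer_top P) S) (discrete_topology UNIV) g"
  unfolding continuous_map_def
proof (intro conjI allI impI)
  show "g \<in> topspace (subtopology (odometer_top P) S) \<rightarrow> topspace (discrete_topology UNIV)" by simp
  fix W :: "'a set" assume "openin (discrete_topology UNIV) W"
  let ?X = "subtopology (odometer_top P) S"
  have "\<exists>T. openin ?X T \<and> x \<in> T \<and> T \<subseteq> {x \<in> topspace ?X. g x \<in> W}"
    if x: "x \<in> {x \<in> topspace ?X. g x \<in> W}" for x
  proof -
    have xS: "x \<in> S" "g x \<in> W" using x by auto
    let ?T = "{y \<in> odometer P. y r = x r} \<inter> S"
    have "openin ?X ?T"
      using cyl_open unfolding openin_subtopology by blast
    moreover have "?T \<subseteq> {x \<in> topspace ?X. g x \<in> W}"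
    proof
      fix y assume y: "y \<in> ?T"
      then have "g y = g x" using assms(2)[of y x] xS(1) by blast
      then show "y \<in> {x \<in> topspace ?X. g x \<in> W}" using y xS(2) assms(1) by auto
    qed
    moreover have "x \<in> ?T" using xS assms(1) by auto
    ultimately show ?thesis by blast
  qed
  then show "openin ?X {x \<in> topspace ?X. g x \<in> W}"
    by (intro openin_subopen[THEN iffD2] ballI) blast
qed

lemma cont_odo:
  assumes "S \<subseteq> odometer P" "h ` S \<subseteq> odometer Q"
    "\<And>i. \<exists>r. \<forall>x\<in>S. \<forall>y\<in>S. x r = y r \<longrightarrow> h x i = h y i"
  shows "continuous_map (subtopology (odometer_top P) S) (odometer_top Q) h"
proof -
  have 1: "continuous_map (subtopology (odometer_top P) S) (product_topology (\<lambda>_. discrete_topology UNIV) UNIV) h"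
    unfolding continuous_map_componentwise_UNIV
  proof
    fix i
    obtain r where "\<forall>x\<in>S. \<forall>y\<in>S. x r = y r \<longrightarrow> h x i = h y i" using assms(3) by blast
    then show "continuous_map (subtopology (odometer_top P) S) (discrete_topology UNIV) (\<lambda>x. h x i)"
      using cont_disc[OF assms(1), of r "\<lambda>x. h x i"] by blast
  qed
  have 2: "h \<in> topspace (subtopology (odometer_top P) S) \<rightarrow> odometer Q"
    using assms(1,2) by auto
  show ?thesis unfolding odometer_top_def[of Q] continuous_map_in_subtopology using 1 2 by blast
qed


lemma pow_chain: "dchain (\<lambda>s. (p::nat)^s)"
  unfolding dchain_def by simp

lemma const_Zp: "(p::nat) > 0 \<Longrightarrow> (\<lambda>r. a mod p^r) \<in> Zp p"
  unfolding Zp_def odometer_def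
proof (intro CollectI allI conjI)
  fix s assume "p > 0"
  then show "a mod p ^ s < p ^ s" by simp
  have "p^s dvd p^(Suc s)" by simp
  then show "a mod p ^ s = a mod p ^ Suc s mod p ^ s" by (simp add: mod_mod_cancel)
qed

lemma funpow_fix_mult: "(f ^^ P) a = a \<Longrightarrow> (f ^^ (q * P)) a = a"
proof (induction q)
  case 0 then show ?case by simp
next
  case (Suc q)
  have "(f ^^ (Suc q * P)) a = (f ^^ P) ((f ^^ (q * P)) a)"
    by (simp add: funpow_add)
  then show ?case using Suc by simp
qed

locale dyn =
  fixes p n :: nat and c :: "nat \<Rightarrow> nat \<Rightarrow> nat" and E :: "(nat \<Rightarrow> nat) set" and x0 :: "nat \<Rightarrow> nat"
  assumes prime: "prime p"
    and coeffs: "\<And>i. i \<le> n \<Longrightarrow> c i \<in> Zp p"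
    and E_sub: "E \<subseteq> Zp p"
    and E_open: "openin (Zp_top p) E"
    and E_closed: "closedin (Zp_top p) E"
    and E_inv: "Zp_poly_eval p n c ` E \<subseteq> E"
    and minimal: "minimal_on (Zp_top p) E (Zp_poly_eval p n c)"
    and x0E: "x0 \<in> E"
begin

abbreviation "F \<equiv> Zp_poly_eval p n c"

definition fs :: "nat \<Rightarrow> nat \<Rightarrow> nat" where
  "fs s a = (\<Sum>i\<le>n. c i s * a ^ i) mod p ^ s"

lemma p_pos: "p > 0" and p_ge2: "p \<ge> 2"
  using prime_gt_1_nat[OF prime] by auto

lemma F_level: "F x s = fs s (x s)"
  by (simp add: Zp_poly_eval_def fs_def)

lemma Fpow_level: "(F ^^ m) x s = (fs s ^^ m) (x s)"
  by (induction m) (simp_all add: F_level)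

lemma Zp_le: "x \<in> Zp p \<Longrightarrow> s \<le> t \<Longrightarrow> x s = x t mod p ^ s"
  unfolding Zp_def using odo_le pow_chain by blast

lemma Zp_lt: "x \<in> Zp p \<Longrightarrow> x s < p ^ s"
  unfolding Zp_def odometer_def by blast

lemma fs_lt: "fs s a < p ^ s"
  unfolding fs_def using p_pos by simp

lemma fs_cong: assumes "s \<le> t" "[a = b] (mod p ^ s)"
  shows "fs s a = fs t b mod p ^ s"
proof -
  have dv: "p^s dvd p^t" using assms(1) by (simp add: le_imp_power_dvd)
  have ci: "[c i s = c i t] (mod p^s)" if "i \<le> n" for i
  proof -
    have "c i s = c i t mod p^s" using Zp_le[OF coeffs[OF that] assms(1)] .
    moreover have "c i s < p^s" using Zp_lt[OF coeffs[OF that]] .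
    ultimately show ?thesis unfolding cong_def by simp
  qed
  have "[(\<Sum>i\<le>n. c i s * a ^ i) = (\<Sum>i\<le>n. c i t * b ^ i)] (mod p^s)"
    by (intro cong_sum cong_mult cong_pow ci assms(2)) simp
  then have "fs s a = (\<Sum>i\<le>n. c i t * b ^ i) mod p^s"
    unfolding fs_def cong_def .
  also have "\<dots> = fs t b mod p^s"
    unfolding fs_def using dv by (simp add: mod_mod_cancel)
  finally show ?thesis .
qed

lemma F_Zp: assumes "x \<in> Zp p" shows "F x \<in> Zp p"
proof -
  have "F x s < p ^ s \<and> F x s = F x (Suc s) mod p ^ s" for s
  proof
    show "F x s < p ^ s" by (simp add: F_level fs_lt)
    have "[x s = x (Suc s)] (mod p^s)"
      using Zp_le[OF assms, of s "Suc s"] unfolding cong_def by simp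
    from fs_cong[OF _ this, of "Suc s"]
    show "F x s = F x (Suc s) mod p ^ s"
      unfolding F_level by simp
  qed
  then show ?thesis unfolding Zp_def odometer_def by blast
qed

lemma Fpow_E: "x \<in> E \<Longrightarrow> (F ^^ m) x \<in> E"
  by (induction m) (use E_inv in auto)

lemma Fpow_Zp: "x \<in> E \<Longrightarrow> (F ^^ m) x \<in> Zp p"
  using Fpow_E E_sub by blast

lemma reach: assumes "x \<in> E" "y \<in> E" shows "\<exists>m. (fs s ^^ m) (x s) = y s"
proof -
  let ?X = "subtopology (Zp_top p) E"
  let ?O = "{(F ^^ m) x | m. True}"
  have eq: "?X closure_of ?O = E"
    using minimal assms(1) unfolding minimal_on_def by blast
  have "y \<in> ?X closure_of ?O" using eq assms(2) by simp
  then have cl: "\<And>T. y \<in> T \<Longrightarrow> openin ?X T \<Longrightarrow> (\<exists>z. z \<in> ?O \<and> z \<in> T)"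
    unfolding in_closure_of by blast
  let ?T = "{z \<in> odometer (\<lambda>s. p^s). z s = y s} \<inter> E"
  have "openin (Zp_top p) {z \<in> odometer (\<lambda>s. p^s). z s = y s}"
    unfolding Zp_top_def by (rule cyl_open)
  then have op: "openin ?X ?T"
    unfolding openin_subtopology by blast
  have "y \<in> odometer (\<lambda>s. p^s)" using assms(2) E_sub unfolding Zp_def by blast
  then have yT: "y \<in> ?T" using assms(2) by simp
  obtain z where z: "z \<in> ?O" "z \<in> ?T" using cl[OF yT op] by blast
  from z(1) obtain m where "z = (F ^^ m) x" by blast
  moreover have "z s = y s" using z(2) by simp
  ultimately show ?thesis using Fpow_level[of m x s] by auto
qed

definition orb :: "nat \<Rightarrow> nat \<Rightarrow> nat" where
  "orb s m = (fs s ^^ m) (x0 s)"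

lemma orb_F: "orb s m = (F ^^ m) x0 s"
  by (simp add: orb_def Fpow_level)

lemma per_ex: "\<exists>m>0. orb s m = x0 s"
proof -
  have "F x0 \<in> E" using Fpow_E[OF x0E, of 1] by simp
  then obtain m where "(fs s ^^ m) (F x0 s) = x0 s" using reach x0E by blast
  moreover have "(fs s ^^ Suc m) (x0 s) = (fs s ^^ m) (fs s (x0 s))"
    by (simp only: funpow_Suc_right o_apply)
  ultimately have "(fs s ^^ Suc m) (x0 s) = x0 s" by (simp add: F_level)
  then show ?thesis unfolding orb_def by blast
qed

definition per :: "nat \<Rightarrow> nat" where
  "per s = (LEAST m. m > 0 \<and> orb s m = x0 s)"

lemma per: "per s > 0" "orb s (per s) = x0 s"
proof -
  have "0 < per s \<and> orb s (per s) = x0 s"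
    unfolding per_def by (rule LeastI_ex[OF per_ex[of s]])
  then show "per s > 0" "orb s (per s) = x0 s" by simp_all
qed

lemma per_min: assumes "0 < m" "m < per s" shows "orb s m \<noteq> x0 s"
proof -
  have "\<not> (0 < m \<and> orb s m = x0 s)"
    using assms(2) unfolding per_def by (rule not_less_Least)
  then show ?thesis using assms(1) by simp
qed

lemma orb_mod: "orb s m = orb s (m mod per s)"
proof -
  have "m = m mod per s + (m div per s) * per s" by simp
  then have "orb s m = (fs s ^^ (m mod per s + (m div per s) * per s)) (x0 s)"
    unfolding orb_def by simp
  also have "\<dots> = (fs s ^^ (m mod per s)) ((fs s ^^ ((m div per s) * per s)) (x0 s))"
    by (simp only: funpow_add o_apply)
  also have "(fs s ^^ ((m div per s) * per s)) (x0 s) = x0 s"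
    using funpow_fix_mult[of "per s" "fs s" "x0 s" "m div per s"] per(2)[of s] unfolding orb_def by simp
  finally show ?thesis unfolding orb_def by simp
qed

lemma funpow_app: "(f ^^ m) ((f ^^ k) x) = (f ^^ (m + k)) x"
  by (simp add: funpow_add)

lemma orb_shift: "orb s (k + i) = (fs s ^^ k) (orb s i)"
  unfolding orb_def funpow_app ..

lemma orb_inj_aux: assumes "i < j" "j < per s" "orb s i = orb s j" shows False
proof -
  have e1: "orb s ((per s - j) + i) = (fs s ^^ (per s - j)) (orb s i)"
    by (rule orb_shift)
  have e2: "orb s ((per s - j) + j) = (fs s ^^ (per s - j)) (orb s j)"
    by (rule orb_shift)
  have e3: "(per s - j) + j = per s" using assms(2) by simp
  have "orb s ((per s - j) + i) = orb s (per s)"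
    using e1 e2 e3 assms(3) by metis
  then have c1: "orb s ((per s - j) + i) = x0 s" using per(2)[of s] by simp
  have c2: "0 < (per s - j) + i" using assms(1,2) by simp
  have c3: "(per s - j) + i < per s" using assms(1,2) by simp
  have "orb s ((per s - j) + i) \<noteq> x0 s" by (rule per_min[OF c2 c3])
  then show False using c1 by contradiction
qed

lemma orb_inj_lt: assumes "i < per s" "j < per s" "orb s i = orb s j" shows "i = j"
proof (rule ccontr)
  assume "i \<noteq> j"
  then consider "i < j" | "j < i" by linarith
  then show False
  proof cases
    case 1 then show False using orb_inj_aux[of i j s] assms by blast
  next
    case 2 then show False using orb_inj_aux[of j i s] assms by simp
  qed
qed

lemma orb_eq_iff: "orb s i = orb s j \<longleftrightarrow> i mod per s = j mod per s"
proof
  assume "orb s i = orb s j"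
  then have "orb s (i mod per s) = orb s (j mod per s)" using orb_mod[of s i] orb_mod[of s j] by simp
  then show "i mod per s = j mod per s"
    using orb_inj_lt[of "i mod per s" s "j mod per s"] per(1)[of s] by simp
next
  assume "i mod per s = j mod per s"
  then show "orb s i = orb s j" using orb_mod[of s i] orb_mod[of s j] by simp
qed

lemma orb_level: "s \<le> t \<Longrightarrow> orb s m = orb t m mod p ^ s"
  unfolding orb_F using Zp_le[OF Fpow_Zp[OF x0E]] by blast

lemma orb0: "orb s 0 = x0 s" by (simp add: orb_def)

lemma per_dvd: assumes "s \<le> t" shows "per s dvd per t"
proof -
  have "orb t (per t) = orb t 0" using per(2)[of t] orb0[of t] by simp
  moreover have "orb s (per t) = orb t (per t) mod p ^ s" by (rule orb_level[OF assms])
  moreover have "orb s 0 = orb t 0 mod p ^ s" by (rule orb_level[OF assms])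
  ultimately have "orb s (per t) = orb s 0" by simp
  then have "per t mod per s = 0 mod per s" by (simp only: orb_eq_iff)
  then show ?thesis by (simp add: dvd_eq_mod_eq_0)
qed

definition idx :: "nat \<Rightarrow> (nat \<Rightarrow> nat) \<Rightarrow> nat" where
  "idx s x = (SOME m. orb s m = x s) mod per s"

lemma idx: assumes "x \<in> E" shows "orb s m = x s \<longleftrightarrow> m mod per s = idx s x"
proof -
  have "\<exists>m. orb s m = x s" using reach[OF x0E assms] unfolding orb_def by blast
  then have m1: "orb s (SOME m. orb s m = x s) = x s" by (rule someI_ex)
  define m1 where "m1 = (SOME m. orb s m = x s)"
  have "orb s m = x s \<longleftrightarrow> orb s m = orb s m1" using m1 unfolding m1_def by simp
  also have "\<dots> \<longleftrightarrow> m mod per s = m1 mod per s" by (rule orb_eq_iff)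
  finally show ?thesis unfolding idx_def m1_def[symmetric] by simp
qed

lemma idx_lt: "idx s x < per s"
  unfolding idx_def using per(1) by simp

lemma idx_orb: "x \<in> E \<Longrightarrow> orb s (idx s x) = x s"
  using idx[of x s "idx s x"] idx_lt[of s x] by simp

end


context dyn begin

lemma orb_lt: "orb s m < p ^ s"
  unfolding orb_F by (rule Zp_lt[OF Fpow_Zp[OF x0E]])

lemma per0: "per 0 = 1"
proof -
  have "orb 0 1 = x0 0"
    using orb_lt[of 0 1] Zp_lt[of x0 0] x0E E_sub by auto
  then have "per 0 \<le> 1" unfolding per_def by (intro Least_le) simp
  then show ?thesis using per(1)[of 0] by simp
qed

lemma per1_le: "per 1 \<le> p"
proof -
  have "inj_on (orb 1) {..<per 1}"
    unfolding inj_on_def using orb_inj_lt by blast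
  moreover have "orb 1 ` {..<per 1} \<subseteq> {..<p}"
    using orb_lt[of 1] by auto
  ultimately have "card {..<per 1} \<le> card {..<p}"
    by (intro card_inj_on_le) auto
  then show ?thesis by simp
qed

lemma per_unbounded: "\<exists>t. B < per t"
proof -
  have "openin (odometer_top (\<lambda>s. p^s)) E" using E_open unfolding Zp_top_def .
  from cyl_basis[OF pow_chain this x0E]
  obtain r where r: "\<And>y. y \<in> odometer (\<lambda>s. p^s) \<Longrightarrow> y r = x0 r \<Longrightarrow> y \<in> E" by blast
  define t where "t = r + B"
  define g where "g j = x0 r + p^r * j" for j
  have x0r: "x0 r < p ^ r" using Zp_lt[of x0 r] x0E E_sub by auto
  have gsub: "g ` {..<p^B} \<subseteq> orb t ` {..<per t}"
  proof
    fix v assume "v \<in> g ` {..<p^B}"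
    then obtain j where j: "j < p^B" "v = g j" by blast
    define z where "z = (\<lambda>u. g j mod p ^ u)"
    have zZ: "z \<in> odometer (\<lambda>s. p^s)" unfolding z_def using const_Zp[OF p_pos] unfolding Zp_def .
    have "z r = x0 r" unfolding z_def g_def using x0r by simp
    then have zE: "z \<in> E" using r zZ by blast
    have "g j < p ^ t"
    proof -
      have "g j < p^r + p^r * j" unfolding g_def using x0r by simp
      also have "\<dots> = p^r * (j + 1)" by simp
      also have "\<dots> \<le> p^r * p^B" using j(1) by (intro mult_le_mono2) simp
      finally show ?thesis unfolding t_def by (simp add: power_add)
    qed
    then have "z t = v" unfolding z_def using j by simp
    then have "orb t (idx t z) = v" using idx_orb[OF zE] by simp
    then show "v \<in> orb t ` {..<per t}" using idx_lt[of t z] by force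
  qed
  have "inj_on g {..<p^B}" unfolding inj_on_def g_def using p_pos by simp
  then have "p^B = card (g ` {..<p^B})" by (simp add: card_image)
  also have "\<dots> \<le> card (orb t ` {..<per t})" using gsub by (intro card_mono) auto
  also have "\<dots> \<le> per t" using card_image_le[of "{..<per t}" "orb t"] by simp
  finally have "p^B \<le> per t" .
  moreover have "B < 2^B" by (rule less_exp)
  moreover have "2^B \<le> p^B" using p_ge2 by (intro power_mono) auto
  ultimately have "B < per t" by linarith
  then show ?thesis by blast
qed

end


lemma taylor_suc:
  fixes B h :: int
  shows "\<exists>K. (B + h) ^ Suc j = B ^ Suc j + of_nat (Suc j) * h * B ^ j + h^2 * K"
proof (induction j)
  case 0
  show ?case by (rule exI[of _ 0]) simp
next
  case (Suc j)
  then obtain K where K: "(B + h) ^ Suc j = B ^ Suc j + of_nat (Suc j) * h * B ^ j + h^2 * K" by blast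
  have "(B + h) ^ Suc (Suc j) = (B + h) * (B ^ Suc j + of_nat (Suc j) * h * B ^ j + h^2 * K)"
    using K by (simp only: power_Suc[of "B + h" "Suc j"])
  also have "\<dots> = B ^ Suc (Suc j) + of_nat (Suc (Suc j)) * h * B ^ Suc j
      + h^2 * (B * K + of_nat (Suc j) * B ^ j + h * K)"
    by (simp add: algebra_simps power2_eq_square)
  finally show ?case by blast
qed

lemma taylor_mono:
  fixes B h :: int
  shows "\<exists>K. (B + h) ^ i = B ^ i + of_nat i * h * B ^ (i - 1) + h^2 * K"
proof (cases i)
  case 0 then show ?thesis by (intro exI[of _ 0]) simp
next
  case (Suc j) then show ?thesis using taylor_suc[of B h j] by simp
qed

lemma taylor:
  fixes B h :: int and C :: "nat \<Rightarrow> int"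
  shows "\<exists>K. (\<Sum>i\<le>n. C i * (B + h) ^ i) =
     (\<Sum>i\<le>n. C i * B ^ i) + h * (\<Sum>i\<le>n. C i * of_nat i * B ^ (i - 1)) + h^2 * K"
proof -
  have "\<forall>i. \<exists>K. (B + h) ^ i = B ^ i + of_nat i * h * B ^ (i - 1) + h^2 * K"
    using taylor_mono by blast
  then obtain Kf where Kf: "\<And>i. (B + h) ^ i = B ^ i + of_nat i * h * B ^ (i - 1) + h^2 * Kf i"
    by metis
  have "(\<Sum>i\<le>n. C i * (B + h) ^ i) =
     (\<Sum>i\<le>n. C i * B ^ i + h * (C i * of_nat i * B ^ (i - 1)) + h^2 * (C i * Kf i))"
    by (intro sum.cong refl) (simp add: Kf algebra_simps)
  also have "\<dots> = (\<Sum>i\<le>n. C i * B ^ i) + h * (\<Sum>i\<le>n. C i * of_nat i * B ^ (i - 1))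
       + h^2 * (\<Sum>i\<le>n. C i * Kf i)"
    by (simp add: sum.distrib sum_distrib_left)
  finally show ?thesis by blast
qed

primrec geo :: "int \<Rightarrow> nat \<Rightarrow> int" where
  "geo M 0 = 0"
| "geo M (Suc r) = 1 + M * geo M r"

lemma geo_one: "[M = 1] (mod m) \<Longrightarrow> [geo M r = of_nat r] (mod m)"
proof (induction r)
  case 0 then show ?case by simp
next
  case (Suc r)
  have "[1 + M * geo M r = 1 + 1 * of_nat r] (mod m)"
    by (intro cong_add cong_mult Suc.prems Suc.IH) simp
  then show ?case by simp
qed

lemma geo_zero: "m dvd M \<Longrightarrow> [geo M (Suc r) = 1] (mod m)"
proof -
  assume "m dvd M"
  then have "[M * geo M r = 0] (mod m)" by (simp add: cong_0_iff)
  then have "[1 + M * geo M r = 1 + 0] (mod m)" by (intro cong_add) simp_all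
  then show ?thesis by simp
qed

lemma geo_closed: "(M - 1) * geo M r = M ^ r - 1"
  by (induction r) (simp_all add: algebra_simps)

lemma prod_periodic:
  assumes "\<And>i. f (i + L) = f i"
  shows "(\<Prod>i<q * L. f i) = (\<Prod>i<L. f i) ^ q"
proof (induction q)
  case 0 then show ?case by simp
next
  case (Suc q)
  have split: "(\<Prod>i<a + b. g i) = (\<Prod>i<a. g i) * (\<Prod>i<b. g (a + i))" for a b and g :: "nat \<Rightarrow> 'b::comm_monoid_mult"
    by (induction b) (simp_all add: ac_simps)
  have per: "f (q * L + i) = f i" for i
  proof (induction q)
    case 0 then show ?case by simp
  next
    case (Suc q)
    have "f (Suc q * L + i) = f ((q * L + i) + L)" by (simp add: algebra_simps)
    also have "\<dots> = f (q * L + i)" by (rule assms)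
    finally show ?case using Suc by simp
  qed
  have "(\<Prod>i<Suc q * L. f i) = (\<Prod>i<q * L + L. f i)" by (simp add: add.commute)
  also have "\<dots> = (\<Prod>i<q * L. f i) * (\<Prod>i<L. f (q * L + i))" by (rule split)
  also have "\<dots> = (\<Prod>i<L. f i) ^ q * (\<Prod>i<L. f i)" using Suc per by simp
  finally show ?case by (simp add: mult.commute)
qed

context dyn begin

definition q :: "nat \<Rightarrow> int \<Rightarrow> int" where
  "q t b = (\<Sum>i\<le>n. int (c i t) * b ^ i)"

definition dq :: "nat \<Rightarrow> int \<Rightarrow> int" where
  "dq t b = (\<Sum>i\<le>n. int (c i t) * of_nat i * b ^ (i - 1))"

lemma fs_int: "[int (fs t a) = q t (int a)] (mod int (p ^ t))"
proof -
  have "int (fs t a) = q t (int a) mod int (p ^ t)"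
    unfolding fs_def q_def by (simp add: of_nat_mod)
  then show ?thesis by simp
qed

lemma step1:
  assumes s1: "1 \<le> s" and A: "[int A = int w + int p ^ s * u] (mod int p ^ Suc s)"
  shows "[int (fs (Suc s) A) = int (fs (Suc s) w) + int p ^ s * u * dq (Suc s) (int w)] (mod int p ^ Suc s)"
proof -
  let ?m = "int p ^ Suc s" and ?h = "int p ^ s"
  obtain k where k: "int w + ?h * u = int A + ?m * k"
    using A unfolding cong_iff_lin by blast
  define u' where "u' = u - int p * k"
  have Aeq: "int A = int w + ?h * u'"
    using k unfolding u'_def by (simp add: algebra_simps)
  obtain K where K: "q (Suc s) (int A) = q (Suc s) (int w) + (?h * u') * dq (Suc s) (int w) + (?h * u')^2 * K"
    unfolding q_def dq_def Aeq using taylor[where C="\<lambda>i. int (c i (Suc s))" and n=n and B="int w" and h="?h * u'"] by blast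
  have m1: "[int (fs (Suc s) A) = q (Suc s) (int A)] (mod ?m)"
    using fs_int[of "Suc s" A] by simp
  have m2: "[int (fs (Suc s) w) = q (Suc s) (int w)] (mod ?m)"
    using fs_int[of "Suc s" w] by simp
  have hh: "(?h * u')^2 * K = ?m * (int p ^ (s - 1) * u'^2 * K)"
  proof -
    have "s + s = Suc s + (s - 1)" using s1 by simp
    then have "?h * ?h = ?m * int p ^ (s - 1)" by (metis power_add)
    then show ?thesis by (simp add: power2_eq_square algebra_simps)
  qed
  have hu: "(?h * u') * dq (Suc s) (int w) = ?h * u * dq (Suc s) (int w) + ?m * (- k * dq (Suc s) (int w))"
    unfolding u'_def by (simp add: algebra_simps)
  have "q (Suc s) (int A) = q (Suc s) (int w) + (?h * u * dq (Suc s) (int w) + ?m * (- k * dq (Suc s) (int w)))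
      + ?m * (int p ^ (s - 1) * u'^2 * K)"
    unfolding K by (simp only: hh hu)
  also have "\<dots> = q (Suc s) (int w) + ?h * u * dq (Suc s) (int w)
      + ?m * (- k * dq (Suc s) (int w) + int p ^ (s - 1) * u'^2 * K)"
    by (simp only: distrib_left add.assoc)
  finally have "q (Suc s) (int A) = q (Suc s) (int w) + ?h * u * dq (Suc s) (int w)
      + ?m * (- k * dq (Suc s) (int w) + int p ^ (s - 1) * u'^2 * K)" .
  then have "q (Suc s) (int A) - (q (Suc s) (int w) + ?h * u * dq (Suc s) (int w))
      = ?m * (- k * dq (Suc s) (int w) + int p ^ (s - 1) * u'^2 * K)" by simp
  then have "[q (Suc s) (int A) = q (Suc s) (int w) + ?h * u * dq (Suc s) (int w)] (mod ?m)"
    unfolding cong_iff_dvd_diff dvd_def by blast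
  moreover have "[q (Suc s) (int w) + ?h * u * dq (Suc s) (int w) =
      int (fs (Suc s) w) + ?h * u * dq (Suc s) (int w)] (mod ?m)"
    using m2 by (intro cong_add) (simp_all add: cong_sym)
  ultimately show ?thesis using m1 cong_trans by blast
qed

lemma iterm:
  assumes s1: "1 \<le> s" and A: "[int A = int w + int p ^ s * u] (mod int p ^ Suc s)"
  shows "[int ((fs (Suc s) ^^ m) A) = int ((fs (Suc s) ^^ m) w)
     + int p ^ s * u * (\<Prod>i<m. dq (Suc s) (int ((fs (Suc s) ^^ i) w)))] (mod int p ^ Suc s)"
proof (induction m)
  case 0 then show ?case using A by simp
next
  case (Suc m)
  have "[int (fs (Suc s) ((fs (Suc s) ^^ m) A)) = int (fs (Suc s) ((fs (Suc s) ^^ m) w))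
     + int p ^ s * (u * (\<Prod>i<m. dq (Suc s) (int ((fs (Suc s) ^^ i) w))))
       * dq (Suc s) (int ((fs (Suc s) ^^ m) w))] (mod int p ^ Suc s)"
    by (rule step1[OF s1]) (use Suc in \<open>simp add: algebra_simps\<close>)
  then show ?case by (simp add: algebra_simps)
qed

end


lemma scale_cong:
  fixes X Y Z :: int and p :: nat
  assumes "[X = Y] (mod int p)"
  shows "[int p ^ s * Z * X = int p ^ s * Z * Y] (mod int p ^ Suc s)"
proof -
  have "int p dvd X - Y" using assms by (simp add: cong_iff_dvd_diff)
  then have "int p ^ s * int p dvd (int p ^ s * Z) * (X - Y)"
    by (intro mult_dvd_mono) simp_all
  then show ?thesis by (simp add: cong_iff_dvd_diff algebra_simps)
qed

context dyn begin

definition der :: "nat \<Rightarrow> int" where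
  "der i = dq 1 (int (orb 1 i))"

definition Mp :: "nat \<Rightarrow> int" where
  "Mp s = (\<Prod>i<per s. der i)"

lemma dq_cong: "[dq (Suc s) (int (orb (Suc s) i)) = der i] (mod int p)"
  unfolding dq_def der_def
proof (intro cong_sum cong_mult cong_pow cong_refl)
  fix j assume "j \<in> {..n}"
  then have j: "j \<le> n" by simp
  have "c j 1 = c j (Suc s) mod p ^ 1" by (rule Zp_le[OF coeffs[OF j]]) simp
  then have "[c j (Suc s) = c j 1] (mod p)"
    unfolding cong_def by simp
  then show "[int (c j (Suc s)) = int (c j 1)] (mod int p)" by (simp add: cong_int_iff)
next
  have "orb 1 i = orb (Suc s) i mod p ^ 1" by (rule orb_level) simp
  then have "[orb (Suc s) i = orb 1 i] (mod p)" unfolding cong_def by simp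
  then show "[int (orb (Suc s) i) = int (orb 1 i)] (mod int p)" by (simp add: cong_int_iff)
qed

lemma der_per: assumes "1 \<le> s" shows "der (i + per s) = der i"
proof -
  have "orb s (i + per s) = orb s i" unfolding orb_eq_iff by simp
  moreover have "orb 1 (i + per s) = orb s (i + per s) mod p ^ 1" by (rule orb_level[OF assms])
  moreover have "orb 1 i = orb s i mod p ^ 1" by (rule orb_level[OF assms])
  ultimately have "orb 1 (i + per s) = orb 1 i" by simp
  then show ?thesis unfolding der_def by simp
qed

lemma Mp_Suc: assumes "1 \<le> s" "per (Suc s) = j * per s" shows "Mp (Suc s) = Mp s ^ j"
  unfolding Mp_def assms(2) by (rule prod_periodic) (rule der_per[OF assms(1)])

lemma lift_key:
  assumes s1: "1 \<le> s" and j: "per (Suc s) = j * per s"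
  shows "\<exists>\<alpha>. \<forall>r. (j dvd r \<longleftrightarrow> int p dvd \<alpha> * geo (Mp s) r)"
proof -
  define L where "L = per s"
  define y where "y = x0 (Suc s)"
  have Lpos: "L > 0" unfolding L_def by (rule per(1))
  have x0Z: "x0 \<in> Zp p" using x0E E_sub by blast
  have "orb s L = x0 s" unfolding L_def by (rule per(2))
  moreover have "orb s L = orb (Suc s) L mod p ^ s" by (rule orb_level) simp
  moreover have "x0 s = x0 (Suc s) mod p ^ s" by (rule Zp_le[OF x0Z]) simp
  ultimately have "[y = orb (Suc s) L] (mod p ^ s)" unfolding cong_def y_def by simp
  then have "[int y = int (orb (Suc s) L)] (mod int p ^ s)"
    using cong_int_iff[of y "orb (Suc s) L" "p ^ s"] by simp
  then obtain \<alpha> where alpha: "int (orb (Suc s) L) = int y + int p ^ s * \<alpha>"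
    unfolding cong_iff_lin by blast
  have orbfs: "(fs (Suc s) ^^ i) y = orb (Suc s) i" for i unfolding orb_def y_def ..
  have R: "[int (orb (Suc s) (r * L)) = int y + int p ^ s * \<alpha> * geo (Mp s) r] (mod int p ^ Suc s)" for r
  proof (induction r)
    case 0 then show ?case by (simp add: orb0 y_def)
  next
    case (Suc r)
    have sh: "orb (Suc s) (Suc r * L) = (fs (Suc s) ^^ L) (orb (Suc s) (r * L))"
      using orb_shift[of "Suc s" L "r * L"] by (simp add: add.commute)
    have pre: "[int (orb (Suc s) (r * L)) = int y + int p ^ s * (\<alpha> * geo (Mp s) r)] (mod int p ^ Suc s)"
      using Suc by (simp add: mult.assoc)
    have it: "[int ((fs (Suc s) ^^ L) (orb (Suc s) (r * L))) = int ((fs (Suc s) ^^ L) y)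
       + int p ^ s * (\<alpha> * geo (Mp s) r) * (\<Prod>i<L. dq (Suc s) (int ((fs (Suc s) ^^ i) y)))] (mod int p ^ Suc s)"
      by (rule iterm[OF s1 pre])
    have pr: "[(\<Prod>i<L. dq (Suc s) (int ((fs (Suc s) ^^ i) y))) = Mp s] (mod int p)"
      unfolding orbfs Mp_def L_def by (intro cong_prod dq_cong)
    have "[int p ^ s * (\<alpha> * geo (Mp s) r) * (\<Prod>i<L. dq (Suc s) (int ((fs (Suc s) ^^ i) y)))
         = int p ^ s * (\<alpha> * geo (Mp s) r) * Mp s] (mod int p ^ Suc s)"
      by (rule scale_cong[OF pr])
    then have "[int ((fs (Suc s) ^^ L) y)
       + int p ^ s * (\<alpha> * geo (Mp s) r) * (\<Prod>i<L. dq (Suc s) (int ((fs (Suc s) ^^ i) y)))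
       = int ((fs (Suc s) ^^ L) y) + int p ^ s * (\<alpha> * geo (Mp s) r) * Mp s] (mod int p ^ Suc s)"
      by (intro cong_add cong_refl)
    with it have "[int (orb (Suc s) (Suc r * L)) = int ((fs (Suc s) ^^ L) y) + int p ^ s * (\<alpha> * geo (Mp s) r) * Mp s] (mod int p ^ Suc s)"
      unfolding sh by (rule cong_trans)
    moreover have "int ((fs (Suc s) ^^ L) y) + int p ^ s * (\<alpha> * geo (Mp s) r) * Mp s
        = int y + int p ^ s * \<alpha> * geo (Mp s) (Suc r)"
      unfolding orbfs alpha by (simp add: algebra_simps)
    ultimately show ?case by simp
  qed
  have ylt: "y < p ^ Suc s" unfolding y_def using Zp_lt[OF x0Z] .
  have K: "j dvd r \<longleftrightarrow> int p dvd \<alpha> * geo (Mp s) r" for r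
  proof -
    have "j dvd r \<longleftrightarrow> j * L dvd r * L" using Lpos by simp
    also have "\<dots> \<longleftrightarrow> (r * L) mod per (Suc s) = 0 mod per (Suc s)"
      unfolding j L_def by (simp add: dvd_eq_mod_eq_0)
    also have "\<dots> \<longleftrightarrow> orb (Suc s) (r * L) = orb (Suc s) 0"
      using orb_eq_iff by simp
    also have "\<dots> \<longleftrightarrow> orb (Suc s) (r * L) = y" by (simp add: orb0 y_def)
    also have "\<dots> \<longleftrightarrow> [int (orb (Suc s) (r * L)) = int y] (mod int p ^ Suc s)"
    proof
      assume "orb (Suc s) (r * L) = y" then show "[int (orb (Suc s) (r * L)) = int y] (mod int p ^ Suc s)" by simp
    next
      assume "[int (orb (Suc s) (r * L)) = int y] (mod int p ^ Suc s)"
      then have "[orb (Suc s) (r * L) = y] (mod p ^ Suc s)"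
        using cong_int_iff[of "orb (Suc s) (r * L)" y "p ^ Suc s"] by simp
      then show "orb (Suc s) (r * L) = y"
        using cong_less_modulus_unique_nat orb_lt ylt by blast
    qed
    also have "\<dots> \<longleftrightarrow> [int y + int p ^ s * \<alpha> * geo (Mp s) r = int y] (mod int p ^ Suc s)"
      using R[of r] cong_sym cong_trans by meson
    also have "\<dots> \<longleftrightarrow> int p ^ s * int p dvd int p ^ s * (\<alpha> * geo (Mp s) r)"
      by (simp add: cong_iff_dvd_diff mult.assoc mult.commute)
    also have "\<dots> \<longleftrightarrow> int p dvd \<alpha> * geo (Mp s) r"
      using p_pos by simp
    finally show ?thesis .
  qed
  then show ?thesis by blast
qed

end


context dyn begin

lemma fermat_int:
  fixes M :: int
  assumes "\<not> int p dvd M"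
  shows "[M ^ (p - 1) = 1] (mod int p)"
proof -
  define a where "a = nat (M mod int p)"
  have ia: "int a = M mod int p" unfolding a_def using p_pos by simp
  have "\<not> p dvd a"
  proof
    assume "p dvd a"
    then have "int p dvd int a" by simp
    then have "int p dvd M mod int p" using ia by simp
    then show False using assms by (simp add: dvd_mod_iff)
  qed
  then have "[a ^ (p - 1) = 1] (mod p)" using fermat_theorem[OF prime] by blast
  then have "[int a ^ (p - 1) = 1] (mod int p)"
    using cong_int_iff[of "a ^ (p - 1)" 1 p] by simp
  moreover have "[M = int a] (mod int p)" unfolding ia cong_def by simp
  then have "[M ^ (p - 1) = int a ^ (p - 1)] (mod int p)" by (rule cong_pow)
  ultimately show ?thesis using cong_trans by blast
qed

lemma transition:
  assumes s1: "1 \<le> s"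
  shows "\<exists>j. per (Suc s) = j * per s \<and> Mp (Suc s) = Mp s ^ j \<and>
    (j = 1 \<or> ([Mp s = 1] (mod int p) \<and> j = p) \<or>
     (\<not> [Mp s = 1] (mod int p) \<and> 0 < j \<and> (\<forall>r. j dvd r \<longleftrightarrow> [Mp s ^ r = 1] (mod int p)) \<and> j dvd p - 1))"
proof -
  have "per s dvd per (Suc s)" by (rule per_dvd) simp
  then obtain j0 where j0: "per (Suc s) = per s * j0" by (rule dvdE)
  define j where "j = j0"
  have j: "per (Suc s) = j * per s" using j0 unfolding j_def by (simp add: mult.commute)
  have "j \<noteq> 0" using per(1)[of "Suc s"] j by (intro notI) simp
  then have jpos: "0 < j" by simp
  have MS: "Mp (Suc s) = Mp s ^ j" by (rule Mp_Suc[OF s1 j])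
  obtain \<alpha> where K: "\<And>r. j dvd r \<longleftrightarrow> int p dvd \<alpha> * geo (Mp s) r"
    using lift_key[OF s1 j] by blast
  have pr: "prime (int p)" using prime by simp
  let ?M = "Mp s"
  have "j = 1 \<or> ([?M = 1] (mod int p) \<and> j = p) \<or>
     (\<not> [?M = 1] (mod int p) \<and> 0 < j \<and> (\<forall>r. j dvd r \<longleftrightarrow> [?M ^ r = 1] (mod int p)) \<and> j dvd p - 1)"
  proof (cases "int p dvd \<alpha>")
    case True
    then have "j dvd 1" using K[of 1] by simp
    then show ?thesis by simp
  next
    case False
    then have K': "j dvd r \<longleftrightarrow> int p dvd geo ?M r" for r
      using K[of r] prime_dvd_mult_iff[OF pr] by blast
    show ?thesis
    proof (cases "int p dvd ?M")
      case True
      obtain j' where j': "j = Suc j'" using jpos by (cases j) auto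
      have "int p dvd geo ?M j" using K'[of j] by simp
      moreover have "[geo ?M (Suc j') = 1] (mod int p)" by (rule geo_zero[OF True])
      ultimately have "int p dvd 1" using j' cong_dvd_iff[of "geo ?M (Suc j')" 1 "int p"] by simp
      then show ?thesis using prime p_ge2 by simp
    next
      case notM: False
      show ?thesis
      proof (cases "[?M = 1] (mod int p)")
        case True
        have "j dvd r \<longleftrightarrow> p dvd r" for r
        proof -
          have "[geo ?M r = int r] (mod int p)" by (rule geo_one[OF True])
          then have "int p dvd geo ?M r \<longleftrightarrow> int p dvd int r" by (rule cong_dvd_iff)
          then show ?thesis using K'[of r] by simp
        qed
        then have jp: "\<And>r. j dvd r \<longleftrightarrow> p dvd r" .
        have "j dvd p" using jp[of p] by simp
        moreover have "p dvd j" using jp[of j] by simp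
        ultimately have "j = p" by (rule dvd_antisym)
        then show ?thesis using True by simp
      next
        case False
        have nd: "\<not> int p dvd ?M - 1" using False by (simp add: cong_iff_dvd_diff)
        have ch: "j dvd r \<longleftrightarrow> [?M ^ r = 1] (mod int p)" for r
        proof -
          have "j dvd r \<longleftrightarrow> int p dvd (?M - 1) * geo ?M r"
            using K'[of r] prime_dvd_mult_iff[OF pr] nd by blast
          also have "\<dots> \<longleftrightarrow> int p dvd ?M ^ r - 1" by (simp only: geo_closed)
          also have "\<dots> \<longleftrightarrow> [?M ^ r = 1] (mod int p)" by (simp add: cong_iff_dvd_diff)
          finally show ?thesis .
        qed
        have "j dvd p - 1" using ch fermat_int[OF notM] by blast
        then show ?thesis using False jpos ch by blast
      qed
    qed
  qed
  then show ?thesis using j MS by blast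
qed

end


context dyn begin

definition dd :: nat where
  "dd = (if [Mp 1 = 1] (mod int p) then 1 else (LEAST j. 0 < j \<and> [Mp 1 ^ j = 1] (mod int p)))"

definition Sec :: "nat \<Rightarrow> bool" where
  "Sec s \<longleftrightarrow> (\<exists>e. per s = per 1 * dd * p ^ e \<and> e < s \<and> [Mp s = 1] (mod int p) \<and> 0 < dd \<and> dd dvd p - 1)"

definition Inv :: "nat \<Rightarrow> bool" where
  "Inv s \<longleftrightarrow> (per s = per 1 \<and> [Mp s = Mp 1] (mod int p)) \<or> Sec s"

lemma ord_char:
  fixes M :: int
  assumes "0 < j" "\<And>r. j dvd r \<longleftrightarrow> [M ^ r = 1] (mod int p)"
  shows "j = (LEAST j. 0 < j \<and> [M ^ j = 1] (mod int p))"
proof (rule Least_equality[symmetric])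
  show "0 < j \<and> [M ^ j = 1] (mod int p)" using assms(2)[of j] assms(1) by simp
next
  fix y assume "0 < y \<and> [M ^ y = 1] (mod int p)"
  then have "j dvd y" "0 < y" using assms(2) by auto
  then show "j \<le> y" by (rule dvd_imp_le)
qed

lemma Inv_step:
  assumes s1: "1 \<le> s" and I: "Inv s"
  shows "Inv (Suc s) \<and> (Sec s \<longrightarrow> Sec (Suc s))"
proof -
  obtain j where j: "per (Suc s) = j * per s" and MS: "Mp (Suc s) = Mp s ^ j"
    and T: "j = 1 \<or> ([Mp s = 1] (mod int p) \<and> j = p) \<or>
     (\<not> [Mp s = 1] (mod int p) \<and> 0 < j \<and> (\<forall>r. j dvd r \<longleftrightarrow> [Mp s ^ r = 1] (mod int p)) \<and> j dvd p - 1)"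
  proof -
    from transition[OF s1] obtain j where
      H: "per (Suc s) = j * per s \<and> Mp (Suc s) = Mp s ^ j \<and> (j = 1 \<or> ([Mp s = 1] (mod int p) \<and> j = p) \<or>
     (\<not> [Mp s = 1] (mod int p) \<and> 0 < j \<and> (\<forall>r. j dvd r \<longleftrightarrow> [Mp s ^ r = 1] (mod int p)) \<and> j dvd p - 1))"
      by (rule exE)
    then show ?thesis using that[of j] by blast
  qed
  show ?thesis
  proof (cases "Sec s")
    case True
    then obtain e where e: "per s = per 1 * dd * p ^ e" "e < s" "[Mp s = 1] (mod int p)" "0 < dd" "dd dvd p - 1"
      unfolding Sec_def by blast
    from T have "Sec (Suc s)"
    proof (elim disjE conjE)
      assume "j = 1"
      then show ?thesis unfolding Sec_def using e j MS by auto
    next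
      assume "[Mp s = 1] (mod int p)" "j = p"
      have "per (Suc s) = per 1 * dd * p ^ Suc e" using j e(1) \<open>j = p\<close> by simp
      moreover have "[Mp s ^ p = 1 ^ p] (mod int p)" by (rule cong_pow[OF e(3)])
      moreover have "Suc e < Suc s" using e(2) by simp
      ultimately show ?thesis unfolding Sec_def using e MS \<open>j = p\<close> by (intro exI[of _ "Suc e"]) auto
    next
      assume "\<not> [Mp s = 1] (mod int p)"
      then show ?thesis using e(3) by blast
    qed
    then show ?thesis unfolding Inv_def by blast
  next
    case False
    then have F: "per s = per 1" "[Mp s = Mp 1] (mod int p)" using I unfolding Inv_def by auto
    from T have "Inv (Suc s)"
    proof (elim disjE conjE)
      assume "j = 1"
      then show ?thesis unfolding Inv_def using F j MS by auto
    next
      assume M1: "[Mp s = 1] (mod int p)" and jp: "j = p"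
      have "[Mp 1 = 1] (mod int p)" by (rule cong_trans[OF cong_sym[OF F(2)] M1])
      then have d1: "dd = 1" unfolding dd_def by simp
      have "[Mp s ^ p = 1 ^ p] (mod int p)" by (rule cong_pow[OF M1])
      then have "[Mp (Suc s) = 1] (mod int p)" using MS jp by simp
      moreover have "per (Suc s) = per 1 * dd * p ^ 1" using j F(1) jp d1 by simp
      ultimately have "Sec (Suc s)" unfolding Sec_def d1 using s1 by (intro exI[of _ 1]) auto
      then show ?thesis unfolding Inv_def by blast
    next
      assume n1: "\<not> [Mp s = 1] (mod int p)" and jpos: "0 < j"
        and ch: "\<forall>r. j dvd r \<longleftrightarrow> [Mp s ^ r = 1] (mod int p)" and jd: "j dvd p - 1"
      have "\<not> [Mp 1 = 1] (mod int p)"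
      proof
        assume "[Mp 1 = 1] (mod int p)"
        then have "[Mp s = 1] (mod int p)" by (rule cong_trans[OF F(2)])
        then show False using n1 by blast
      qed
      then have ddv: "dd = (LEAST j. 0 < j \<and> [Mp 1 ^ j = 1] (mod int p))" unfolding dd_def by simp
      have ch1: "j dvd r \<longleftrightarrow> [Mp 1 ^ r = 1] (mod int p)" for r
      proof -
        have c: "[Mp s ^ r = Mp 1 ^ r] (mod int p)" by (rule cong_pow[OF F(2)])
        have "[Mp s ^ r = 1] (mod int p) \<longleftrightarrow> [Mp 1 ^ r = 1] (mod int p)"
        proof
          assume "[Mp s ^ r = 1] (mod int p)"
          then show "[Mp 1 ^ r = 1] (mod int p)" by (rule cong_trans[OF cong_sym[OF c]])
        next
          assume "[Mp 1 ^ r = 1] (mod int p)"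
          then show "[Mp s ^ r = 1] (mod int p)" by (rule cong_trans[OF c])
        qed
        then show ?thesis using spec[OF ch, of r] by simp
      qed
      have jd': "j = dd" unfolding ddv by (rule ord_char[OF jpos ch1])
      have "[Mp s ^ j = 1] (mod int p)" using spec[OF ch, of j] by simp
      then have "[Mp (Suc s) = 1] (mod int p)" using MS by simp
      moreover have "per (Suc s) = per 1 * dd * p ^ 0" using j F(1) jd' by simp
      ultimately have "Sec (Suc s)" unfolding Sec_def using jpos jd jd' by (intro exI[of _ 0]) auto
      then show ?thesis unfolding Inv_def by blast
    qed
    then show ?thesis using False by blast
  qed
qed

lemma Inv_all: "1 \<le> s \<Longrightarrow> Inv s"
proof (induction s rule: dec_induct)
  case base then show ?case unfolding Inv_def by simp
next
  case (step s) then show ?case using Inv_step by blast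
qed

lemma Sec_mono: assumes "Sec s1" "s1 \<le> s" shows "Sec s"
  using assms(2)
proof (induction s rule: dec_induct)
  case base then show ?case using assms(1) .
next
  case (step s)
  have "1 \<le> s" using assms(1) step(1) unfolding Sec_def by auto
  then show ?case using Inv_step[OF _ Inv_all] step by blast
qed

lemma Sec_ex: "\<exists>t. Sec t"
proof -
  obtain t where t: "per 1 < per t" using per_unbounded by blast
  have "t \<noteq> 0"
  proof
    assume "t = 0"
    then have "per 1 < 1" using t per0 by simp
    then show False using per(1)[of 1] by simp
  qed
  then have "Inv t" using Inv_all by simp
  then show ?thesis using t unfolding Inv_def by auto
qed

lemma dd_facts: "0 < dd" "dd dvd p - 1"
  using Sec_ex unfolding Sec_def by auto

lemma k_facts: "1 \<le> per 1" "per 1 \<le> p"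
  using per(1)[of 1] per1_le by auto

lemma N1: "per s dvd odo_seq p (per 1) dd (Suc s)"
proof (cases "s = 0")
  case True then show ?thesis using per0 by simp
next
  case False
  then have "Inv s" using Inv_all by simp
  then show ?thesis
  proof (unfold Inv_def, elim disjE conjE)
    assume "per s = per 1"
    then show ?thesis unfolding odo_seq_def by simp
  next
    assume "Sec s"
    then obtain e where e: "per s = per 1 * dd * p ^ e" "e < s" unfolding Sec_def by blast
    have "p ^ e dvd p ^ s" using e(2) by (simp add: le_imp_power_dvd)
    then show ?thesis unfolding odo_seq_def e(1) by simp
  qed
qed

lemma N2: "\<exists>s\<ge>t. odo_seq p (per 1) dd t dvd per s"
proof -
  obtain t1 where t1: "Sec t1" using Sec_ex by blast
  obtain u where u: "per 1 * dd * p ^ t < per u" using per_unbounded by blast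
  define s where "s = max (max t u) t1"
  have "Sec s" using Sec_mono[OF t1] unfolding s_def by simp
  then obtain e where e: "per s = per 1 * dd * p ^ e" unfolding Sec_def by blast
  have "per u dvd per s" using per_dvd[of u s] unfolding s_def by simp
  then have "per u \<le> per s" using per(1)[of s] by (rule dvd_imp_le)
  then have "per 1 * dd * p ^ t < per 1 * dd * p ^ e" using u e by linarith
  then have "p ^ t < p ^ e" using mult_less_cancel1[of "per 1 * dd" "p ^ t" "p ^ e"] by blast
  then have te: "t < e" using p_ge2 by (simp add: power_less_imp_less_exp)
  have "odo_seq p (per 1) dd t dvd per 1 * dd * p ^ e"
  proof (cases "t = 0")
    case True then show ?thesis unfolding odo_seq_def by simp
  next
    case False
    have "p ^ (t - 1) dvd p ^ e" using te by (simp add: le_imp_power_dvd)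
    then show ?thesis unfolding odo_seq_def using False by simp
  qed
  then show ?thesis using e unfolding s_def by (intro exI[of _ s]) (auto simp: s_def)
qed

end


context dyn begin

abbreviation "P \<equiv> odo_seq p (per 1) dd"

lemma P_pos: "0 < P t"
  unfolding odo_seq_def using k_facts dd_facts p_pos by simp

lemma P_chain: "dchain P"
  unfolding dchain_def
proof
  fix t
  show "P t dvd P (Suc t)"
  proof (cases "t = 0")
    case True then show ?thesis unfolding odo_seq_def by simp
  next
    case False
    then have "p ^ (t - 1) dvd p ^ t" by (simp add: le_imp_power_dvd)
    then show ?thesis unfolding odo_seq_def using False by simp
  qed
qed

definition sig :: "nat \<Rightarrow> nat" where
  "sig t = (SOME s. s \<ge> t \<and> P t dvd per s)"

lemma sig: "sig t \<ge> t" "P t dvd per (sig t)"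
proof -
  have "sig t \<ge> t \<and> P t dvd per (sig t)"
    unfolding sig_def using N2[of t] by (rule someI_ex)
  then show "sig t \<ge> t" "P t dvd per (sig t)" by simp_all
qed

lemma idx_level: assumes "x \<in> E" "a \<le> b" shows "idx b x mod per a = idx a x"
proof -
  have xZ: "x \<in> Zp p" using assms(1) E_sub by blast
  have "orb b (idx b x) = x b" by (rule idx_orb[OF assms(1)])
  moreover have "orb a (idx b x) = orb b (idx b x) mod p ^ a" by (rule orb_level[OF assms(2)])
  moreover have "x a = x b mod p ^ a" by (rule Zp_le[OF xZ assms(2)])
  ultimately have "orb a (idx b x) = x a" by simp
  then show ?thesis using idx[OF assms(1)] by blast
qed

lemma idx_cong: assumes "x \<in> E" "Q dvd per a" "Q dvd per b" shows "idx a x mod Q = idx b x mod Q"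
proof -
  define m where "m = max a b"
  have "idx m x mod per a = idx a x" using idx_level[OF assms(1)] unfolding m_def by simp
  then have 1: "idx a x mod Q = idx m x mod Q" using assms(2) by (metis mod_mod_cancel)
  have "idx m x mod per b = idx b x" using idx_level[OF assms(1)] unfolding m_def by simp
  then have 2: "idx b x mod Q = idx m x mod Q" using assms(3) by (metis mod_mod_cancel)
  show ?thesis using 1 2 by simp
qed

definition hh :: "(nat \<Rightarrow> nat) \<Rightarrow> (nat \<Rightarrow> nat)" where
  "hh x = (\<lambda>t. idx (sig t) x mod P t)"

definition gg :: "(nat \<Rightarrow> nat) \<Rightarrow> (nat \<Rightarrow> nat)" where
  "gg y = (\<lambda>s. orb s (y (Suc s)))"

lemma hh_odo: assumes "x \<in> E" shows "hh x \<in> odometer P"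
proof -
  have "hh x t < P t \<and> hh x t = hh x (Suc t) mod P t" for t
  proof
    show "hh x t < P t" unfolding hh_def using P_pos by simp
    have d1: "P t dvd P (Suc t)" using P_chain unfolding dchain_def by blast
    have d2: "P t dvd per (sig (Suc t))" using dvd_trans[OF d1 sig(2)] .
    have "hh x (Suc t) mod P t = idx (sig (Suc t)) x mod P t"
      unfolding hh_def using d1 by (simp add: mod_mod_cancel)
    also have "\<dots> = idx (sig t) x mod P t"
      using idx_cong[OF assms d2 sig(2)] by simp
    finally show "hh x t = hh x (Suc t) mod P t" unfolding hh_def by simp
  qed
  then show ?thesis unfolding odometer_def by blast
qed

lemma gg_Zp: assumes "y \<in> odometer P" shows "gg y \<in> Zp p"
proof -
  have "gg y s < p ^ s \<and> gg y s = gg y (Suc s) mod p ^ s" for s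
  proof
    show "gg y s < p ^ s" unfolding gg_def by (rule orb_lt)
    have "y (Suc s) = y (Suc (Suc s)) mod P (Suc s)" using assms unfolding odometer_def by blast
    then have "y (Suc s) mod per s = y (Suc (Suc s)) mod per s"
      using N1[of s] by (simp add: mod_mod_cancel)
    then have "orb s (y (Suc s)) = orb s (y (Suc (Suc s)))" by (simp only: orb_eq_iff)
    also have "\<dots> = orb (Suc s) (y (Suc (Suc s))) mod p ^ s" by (rule orb_level) simp
    finally show "gg y s = gg y (Suc s) mod p ^ s" unfolding gg_def .
  qed
  then show ?thesis unfolding Zp_def odometer_def by blast
qed

lemma gg_E: assumes "y \<in> odometer P" shows "gg y \<in> E"
proof (rule ccontr)
  assume nE: "gg y \<notin> E"
  have Z: "gg y \<in> Zp p" by (rule gg_Zp[OF assms])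
  have "openin (Zp_top p) (topspace (Zp_top p) - E)" using E_closed unfolding closedin_def by blast
  then have op: "openin (odometer_top (\<lambda>s. p ^ s)) (odometer (\<lambda>s. p ^ s) - E)"
    unfolding Zp_top_def by simp
  have "gg y \<in> odometer (\<lambda>s. p ^ s) - E" using Z nE unfolding Zp_def by blast
  from cyl_basis[OF pow_chain op this]
  obtain r where r: "\<And>z. z \<in> odometer (\<lambda>s. p ^ s) \<Longrightarrow> z r = gg y r \<Longrightarrow> z \<in> odometer (\<lambda>s. p ^ s) - E"
    by blast
  define z where "z = (F ^^ (y (Suc r))) x0"
  have zE: "z \<in> E" unfolding z_def by (rule Fpow_E[OF x0E])
  then have zZ: "z \<in> odometer (\<lambda>s. p ^ s)" using E_sub unfolding Zp_def by blast
  have "z r = gg y r" unfolding z_def gg_def orb_F ..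
  then have "z \<in> odometer (\<lambda>s. p ^ s) - E" using r zZ by blast
  then show False using zE by blast
qed

lemma gh: assumes "x \<in> E" shows "gg (hh x) = x"
proof
  fix s
  define a where "a = sig (Suc s)"
  have sa: "s \<le> a" using sig(1)[of "Suc s"] unfolding a_def by simp
  have dv: "per s dvd P (Suc s)" by (rule N1)
  have "(idx a x mod P (Suc s)) mod per s = idx a x mod per s"
    using dv by (simp add: mod_mod_cancel)
  also have "\<dots> = idx s x" by (rule idx_level[OF assms sa])
  finally have "orb s (idx a x mod P (Suc s)) = x s" using idx[OF assms] by blast
  then show "gg (hh x) s = x s" unfolding gg_def hh_def a_def by simp
qed

lemma hg: assumes "y \<in> odometer P" shows "hh (gg y) = y"
proof
  fix t
  define a where "a = sig t"
  have gE: "gg y \<in> E" by (rule gg_E[OF assms])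
  have "orb a (y (Suc a)) = gg y a" unfolding gg_def ..
  then have "y (Suc a) mod per a = idx a (gg y)" using idx[OF gE] by blast
  then have "idx a (gg y) mod P t = y (Suc a) mod P t"
    using sig(2)[of t] unfolding a_def by (metis mod_mod_cancel)
  also have "\<dots> = y t"
    using odo_le[OF assms P_chain, of t "Suc a"] sig(1)[of t] unfolding a_def by simp
  finally show "hh (gg y) t = y t" unfolding hh_def a_def .
qed

lemma hh_conj: assumes "x \<in> E" shows "hh (F x) = adding_machine P (hh x)"
proof
  fix t
  define a where "a = sig t"
  have FE: "F x \<in> E" using E_inv assms by blast
  have "orb a (1 + idx a x) = (fs a ^^ 1) (orb a (idx a x))" by (rule orb_shift)
  also have "\<dots> = F x a" using idx_orb[OF assms] by (simp add: F_level)
  finally have "(1 + idx a x) mod per a = idx a (F x)" using idx[OF FE] by blast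
  then have "idx a (F x) mod P t = (1 + idx a x) mod P t"
    using sig(2)[of t] unfolding a_def by (metis mod_mod_cancel)
  also have "\<dots> = (idx a x mod P t + 1) mod P t" by (simp add: mod_simps)
  finally show "hh (F x) t = adding_machine P (hh x) t"
    unfolding hh_def adding_machine_def a_def .
qed

lemma conj_main:
  "top_conjugate (subtopology (Zp_top p) E) F (odometer_top P) (adding_machine P)"
proof -
  let ?X = "subtopology (Zp_top p) E"
  have EO: "E \<subseteq> odometer (\<lambda>s. p ^ s)" using E_sub unfolding Zp_def .
  have tX: "topspace ?X = E" using EO unfolding Zp_top_def by auto
  have ch: "continuous_map ?X (odometer_top P) hh"
    unfolding Zp_top_def
  proof (rule cont_odo[OF EO])
    show "hh ` E \<subseteq> odometer P" using hh_odo by blast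
    fix t
    show "\<exists>r. \<forall>x\<in>E. \<forall>y\<in>E. x r = y r \<longrightarrow> hh x t = hh y t"
      by (rule exI[of _ "sig t"]) (simp add: hh_def idx_def)
  qed
  have cg0: "continuous_map (subtopology (odometer_top P) (odometer P)) (odometer_top (\<lambda>s. p ^ s)) gg"
  proof (rule cont_odo)
    show "gg ` odometer P \<subseteq> odometer (\<lambda>s. p ^ s)" using gg_Zp unfolding Zp_def by blast
    fix s
    show "\<exists>r. \<forall>x\<in>odometer P. \<forall>y\<in>odometer P. x r = y r \<longrightarrow> gg x s = gg y s"
      by (rule exI[of _ "Suc s"]) (simp add: gg_def)
  qed simp
  have st: "subtopology (odometer_top P) (odometer P) = odometer_top P"
    using subtopology_topspace[of "odometer_top P"] by simp
  have cg: "continuous_map (odometer_top P) ?X gg"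
    unfolding Zp_top_def continuous_map_in_subtopology
    using cg0 gg_E unfolding st by auto
  have "homeomorphic_maps ?X (odometer_top P) hh gg"
    unfolding homeomorphic_maps_def using ch cg tX gh hg by simp
  then have "homeomorphic_map ?X (odometer_top P) hh"
    unfolding homeomorphic_map_maps by blast
  moreover have "\<forall>x\<in>topspace ?X. hh (F x) = adding_machine P (hh x)"
    using tX hh_conj by simp
  ultimately show ?thesis unfolding top_conjugate_def by blast
qed

end

theorem theoremC:
  fixes p n :: nat and c :: "nat \<Rightarrow> nat \<Rightarrow> nat" and E :: "(nat \<Rightarrow> nat) set"
  assumes "prime p"
    and coeffs: "\<And>i. i \<le> n \<Longrightarrow> c i \<in> Zp p"
    and lead: "c n \<noteq> Zp_zero"
    and deg: "n \<ge> 2"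
    and E_sub: "E \<subseteq> Zp p"
    and E_ne: "E \<noteq> {}"
    and E_open: "openin (Zp_top p) E"
    and E_closed: "closedin (Zp_top p) E"
    and E_inv: "Zp_poly_eval p n c ` E \<subseteq> E"
    and minimal: "minimal_on (Zp_top p) E (Zp_poly_eval p n c)"
  shows "\<exists>k d. 1 \<le> k \<and> k \<le> p \<and> d > 0 \<and> d dvd (p - 1) \<and>
           top_conjugate (subtopology (Zp_top p) E) (Zp_poly_eval p n c)
             (odometer_top (odo_seq p k d)) (adding_machine (odo_seq p k d))"
proof -
  obtain x0 where x0: "x0 \<in> E" using E_ne by blast
  interpret D: dyn p n c E x0
    by unfold_locales (use assms x0 in auto)
  show ?thesis using D.k_facts D.dd_facts D.conj_main by blast
qed

end
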